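(* Let $R$ be a $\sigma$-(sps) Armendariz ring, where $\sigma$ is an endomorphism of $R$. Let $f=\sum_{i=0}^\infty a_ix^i$, $g=\sum_{j=0}^\infty b_jx^j$, $h=\sum_{k=0}^\infty c_kx^k\in R[[x;\sigma]]$. If $fgh=0$, then $a_ib_jc_k=0$ for all $i,j,k\ge 0$.
   Context: All rings are associative with identity; $\sigma$ denotes a nonzero, non-identity ring endomorphism of $R$. The skew power series ring $R[[x;\sigma]]$ consists of all formal series $\sum_{i=0}^\infty a_i x^i$ with $a_i\in R$, added termwise and multiplied using distributivity and the rule $xa=\sigma(a)x$ for $a\in R$. A ring $R$ is $\sigma$-(sps) Armendariz if whenever $p=\sum_{i=0}^\infty a_ix^i$ and $q=\sum_{j=0}^\infty b_jx^j$ in $R[[x;\sigma]]$ satisfy $pq=0$, then $a_ib_j=0$ for all $i,j$. *)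

theory Defs
  imports Main
begin

definition ring_endo :: "('a::ring_1 \<Rightarrow> 'a) \<Rightarrow> bool" where
  "ring_endo \<sigma> \<longleftrightarrow> (\<forall>a b. \<sigma> (a + b) = \<sigma> a + \<sigma> b) \<and>
                     (\<forall>a b. \<sigma> (a * b) = \<sigma> a * \<sigma> b) \<and> \<sigma> 1 = 1"

text \<open>Elements of the skew power series ring R[[x;sigma]] are represented by their
  coefficient sequences nat => R. Multiplication uses x a = sigma(a) x, so
  (a_i x^i)(b_j x^j) = a_i sigma^i(b_j) x^(i+j).\<close>
definition skew_mult :: "('a::ring_1 \<Rightarrow> 'a) \<Rightarrow> (nat \<Rightarrow> 'a) \<Rightarrow> (nat \<Rightarrow> 'a) \<Rightarrow> (nat \<Rightarrow> 'a)" where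
  "skew_mult \<sigma> p q = (\<lambda>n. \<Sum>i\<le>n. p i * (\<sigma> ^^ i) (q (n - i)))"

definition sps_armendariz :: "('a::ring_1 \<Rightarrow> 'a) \<Rightarrow> bool" where
  "sps_armendariz \<sigma> \<longleftrightarrow>
     (\<forall>p q. skew_mult \<sigma> p q = (\<lambda>_. 0) \<longrightarrow> (\<forall>i j. p i * q j = 0))"

end

theory Submission
  imports Defs
begin

lemma tri_swap:
  fixes G :: "nat \<Rightarrow> nat \<Rightarrow> nat \<Rightarrow> 'a::comm_monoid_add"
  shows "(\<Sum>m\<le>n. \<Sum>i\<le>m. G i (m-i) (n-m)) = (\<Sum>i\<le>n. \<Sum>j\<le>n-i. G i j (n-i-j))"
proof -
  have "(\<Sum>m\<le>n. \<Sum>i\<le>m. G i (m-i) (n-m)) = (\<Sum>(m,i)\<in>Sigma {..n} (\<lambda>m. {..m}). G i (m-i) (n-m))"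
    by (simp add: sum.Sigma)
  also have "\<dots> = (\<Sum>(i,j)\<in>Sigma {..n} (\<lambda>i. {..n-i}). G i j (n-i-j))"
    by (rule sum.reindex_bij_witness[where i="\<lambda>(i,j). (i+j, i)" and j="\<lambda>(m,i). (i, m-i)"]) auto
  also have "\<dots> = (\<Sum>i\<le>n. \<Sum>j\<le>n-i. G i j (n-i-j))"
    by (simp add: sum.Sigma)
  finally show ?thesis .
qed

lemma endo_pow:
  assumes "ring_endo \<sigma>"
  shows "ring_endo (\<sigma> ^^ k)"
proof (induction k)
  case 0 then show ?case by (simp add: ring_endo_def)
next
  case (Suc k) then show ?case using assms by (simp add: ring_endo_def)
qed

lemma endo_sum:
  assumes "ring_endo \<tau>"
  shows "\<tau> (\<Sum>i\<in>A. F i) = (\<Sum>i\<in>A. \<tau> (F i))"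
proof (induction A rule: infinite_finite_induct)
  case (infinite A)
  have "\<tau> 0 = 0" using assms unfolding ring_endo_def
    by (metis add_cancel_right_right add_0)
  then show ?case using infinite by simp
next
  case empty
  have "\<tau> 0 = 0" using assms unfolding ring_endo_def
    by (metis add_cancel_right_right add_0)
  then show ?case by simp
next
  case (insert x F) then show ?case using assms by (simp add: ring_endo_def)
qed

lemma skew_assoc:
  assumes "ring_endo \<sigma>"
  shows "skew_mult \<sigma> (skew_mult \<sigma> f g) h = skew_mult \<sigma> f (skew_mult \<sigma> g h)"
proof
  fix n
  have L: "skew_mult \<sigma> (skew_mult \<sigma> f g) h n =
     (\<Sum>m\<le>n. \<Sum>i\<le>m. f i * (\<sigma>^^i) (g (m-i)) * (\<sigma>^^(i + (m-i))) (h (n-m)))"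
    by (simp add: skew_mult_def sum_distrib_right)
  have R: "skew_mult \<sigma> f (skew_mult \<sigma> g h) n =
     (\<Sum>i\<le>n. \<Sum>j\<le>n-i. f i * (\<sigma>^^i) (g j) * (\<sigma>^^(i + j)) (h (n-i-j)))"
  proof -
    have "\<And>i j. (\<sigma>^^i) (g j * (\<sigma>^^j) (h (n-i-j))) = (\<sigma>^^i) (g j) * (\<sigma>^^(i + j)) (h (n-i-j))"
    proof -
      fix i j
      show "(\<sigma>^^i) (g j * (\<sigma>^^j) (h (n-i-j))) = (\<sigma>^^i) (g j) * (\<sigma>^^(i + j)) (h (n-i-j))"
        using endo_pow[OF assms, of i] by (simp add: ring_endo_def funpow_add)
    qed
    then show ?thesis
      by (simp add: skew_mult_def sum_distrib_left endo_sum[OF endo_pow[OF assms]] mult.assoc)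
  qed
  show "skew_mult \<sigma> (skew_mult \<sigma> f g) h n = skew_mult \<sigma> f (skew_mult \<sigma> g h) n"
    unfolding L R
    using tri_swap[of "\<lambda>i j k. f i * (\<sigma>^^i) (g j) * (\<sigma>^^(i + j)) (h k)" n] by simp
qed

theorem lemma2p4:
  fixes \<sigma> :: "'a::ring_1 \<Rightarrow> 'a" and f g h :: "nat \<Rightarrow> 'a"
  assumes "ring_endo \<sigma>" and "\<sigma> \<noteq> (\<lambda>_. 0)" and "\<sigma> \<noteq> id"
    and "sps_armendariz \<sigma>"
    and "skew_mult \<sigma> (skew_mult \<sigma> f g) h = (\<lambda>_. 0)"
  shows "\<forall>i j k. f i * g j * h k = 0"
proof (intro allI)
  fix i j k
  have "skew_mult \<sigma> f (skew_mult \<sigma> g h) = (\<lambda>_. 0)"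
    using assms(5) skew_assoc[OF assms(1)] by simp
  then have A: "\<And>m. f i * skew_mult \<sigma> g h m = 0"
    using assms(4) unfolding sps_armendariz_def by blast
  have "skew_mult \<sigma> (\<lambda>j. f i * g j) h = (\<lambda>_. 0)"
  proof
    fix n
    show "skew_mult \<sigma> (\<lambda>j. f i * g j) h n = 0"
      using A[of n] by (simp add: skew_mult_def sum_distrib_left mult.assoc)
  qed
  then show "f i * g j * h k = 0"
    using assms(4) unfolding sps_armendariz_def by blast
qed

end
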